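(* Let $G$ act by isometries on a $\delta$-hyperbolic geodesic space $X$, let $\alpha\ge3\delta$ and let $U\subset G$ be $\alpha$-reduced at $p\in X$. Let $n\ge2$, let $w\equiv u_1\cdots u_n$ be a reduced word over $U\sqcup U^{-1}$, and set $x_0=p$, $x_i=u_1\cdots u_ip$ for $1\le i\le n$. Then: (i) $(x_{i-1},x_{i+1})_{x_i}+(x_i,x_{i+2})_{x_{i+1}}<|x_i-x_{i+1}|-2(\alpha+50\delta)$ for every $i\in\{1,\dots,n-2\}$; (ii) $|wp-p|\ge\frac12|u_1p-p|+\frac12|u_np-p|+2(n-1)(\alpha+40\delta)+4(n-1)\delta$; (iii) $(p,wp)_{x_i}\le(u_i^{-1}p,u_{i+1}p)_p+2\delta$ for every $i\in\{1,\dots,n-2\}$.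
   Context: Hyperbolicity: $(x,z)_t\ge\min\{(x,y)_t,(y,z)_t\}-\delta$ with Gromov product $(x,y)_z=\frac12(|x-z|+|y-z|-|x-y|)$. For $\alpha\ge3\delta$, a finite subset $U\subset G$ is $\alpha$-reduced at $p\in X$ if $U\cap U^{-1}=\varnothing$ and for every pair of distinct $u_1,u_2\in U\sqcup U^{-1}$, $(u_1p,u_2p)_p<\frac12\min\{|u_1p-p|,|u_2p-p|\}-\alpha-50\delta$. Words over $U\sqcup U^{-1}$ are evaluated in $G$. *)

theory Defs
  imports "HOL-Analysis.Analysis" "HOL-Algebra.Group"
begin

definition gprod :: "'x::metric_space \<Rightarrow> 'x \<Rightarrow> 'x \<Rightarrow> real" where
  "gprod x y z = (dist x z + dist y z - dist x y) / 2"

text \<open>Geodesic metric space (the whole type is the space).\<close>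
definition geodesic_space :: "'x::metric_space itself \<Rightarrow> bool" where
  "geodesic_space TYPE('x) \<longleftrightarrow>
     (\<forall>x y::'x. \<exists>\<gamma>::real \<Rightarrow> 'x. \<gamma> 0 = x \<and> \<gamma> (dist x y) = y \<and>
        (\<forall>s\<in>{0..dist x y}. \<forall>t\<in>{0..dist x y}. dist (\<gamma> s) (\<gamma> t) = \<bar>s - t\<bar>))"

definition hyperbolic :: "'x::metric_space itself \<Rightarrow> real \<Rightarrow> bool" where
  "hyperbolic TYPE('x) \<delta> \<longleftrightarrow>
     (\<forall>x y z t::'x. gprod x z t \<ge> min (gprod x y t) (gprod y z t) - \<delta>)"

definition isometric_action :: "('g, 'b) monoid_scheme \<Rightarrow> ('g \<Rightarrow> 'x::metric_space \<Rightarrow> 'x) \<Rightarrow> bool" where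
  "isometric_action G act \<longleftrightarrow>
     (\<forall>x. act \<one>\<^bsub>G\<^esub> x = x) \<and>
     (\<forall>g\<in>carrier G. \<forall>h\<in>carrier G. \<forall>x. act (g \<otimes>\<^bsub>G\<^esub> h) x = act g (act h x)) \<and>
     (\<forall>g\<in>carrier G. \<forall>x y. dist (act g x) (act g y) = dist x y)"

definition alpha_reduced ::
  "('g, 'b) monoid_scheme \<Rightarrow> ('g \<Rightarrow> 'x::metric_space \<Rightarrow> 'x) \<Rightarrow> real \<Rightarrow> real \<Rightarrow> 'g set \<Rightarrow> 'x \<Rightarrow> bool" where
  "alpha_reduced G act \<delta> \<alpha> U p \<longleftrightarrow>
     finite U \<and> U \<subseteq> carrier G \<and> U \<inter> (\<lambda>u. inv\<^bsub>G\<^esub> u) ` U = {} \<and>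
     (\<forall>u1\<in>U \<union> (\<lambda>u. inv\<^bsub>G\<^esub> u) ` U. \<forall>u2\<in>U \<union> (\<lambda>u. inv\<^bsub>G\<^esub> u) ` U. u1 \<noteq> u2 \<longrightarrow>
        gprod (act u1 p) (act u2 p) p
          < min (dist (act u1 p) p) (dist (act u2 p) p) / 2 - \<alpha> - 50 * \<delta>)"

definition wprod :: "('g, 'b) monoid_scheme \<Rightarrow> 'g list \<Rightarrow> 'g" where
  "wprod G ws = foldr (\<lambda>a b. a \<otimes>\<^bsub>G\<^esub> b) ws \<one>\<^bsub>G\<^esub>"

definition reduced_word :: "('g, 'b) monoid_scheme \<Rightarrow> 'g set \<Rightarrow> 'g list \<Rightarrow> bool" where
  "reduced_word G U ws \<longleftrightarrow>
     set ws \<subseteq> U \<union> (\<lambda>u. inv\<^bsub>G\<^esub> u) ` U \<and>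
     (\<forall>i. Suc i < length ws \<longrightarrow> ws ! Suc i \<noteq> inv\<^bsub>G\<^esub> (ws ! i))"

end

theory Submission
  imports Defs
begin

lemma gprod_comm: "gprod x y z = gprod y x z"
  by (simp add: gprod_def dist_commute)

lemma gprod_pair: "gprod a z b + gprod b z a = dist a b"
  by (simp add: gprod_def dist_commute field_simps)

lemma hyp_delta_nonneg:
  assumes "hyperbolic TYPE('x::metric_space) \<delta>"
  shows "\<delta> \<ge> 0"
proof -
  fix a :: 'x
  have "gprod a a a \<ge> min (gprod a a a) (gprod a a a) - \<delta>"
    using assms unfolding hyperbolic_def by blast
  thus ?thesis by simp
qed

lemma chain:
  fixes y :: "nat \<Rightarrow> 'x::metric_space"
  assumes hyp: "hyperbolic TYPE('x) \<delta>"
  and H: "\<And>j. 1 \<le> j \<Longrightarrow> j+1 < m \<Longrightarrow> gprod (y(j-1)) (y(j+1)) (y j) + gprod (y j) (y(j+2)) (y(j+1)) + 2*\<delta> < dist (y j) (y(j+1))"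
  shows "1 \<le> k \<Longrightarrow> k < m \<Longrightarrow> gprod (y 0) (y(k+1)) (y k) \<le> gprod (y(k-1)) (y(k+1)) (y k) + \<delta>"
proof (induction k)
  case 0
  then show ?case by simp
next
  case (Suc k)
  have d0: "\<delta> \<ge> 0" using hyp_delta_nonneg[OF hyp] .
  show ?case
  proof (cases "k = 0")
    case True
    then show ?thesis using d0 by simp
  next
    case False
    hence IH: "gprod (y 0) (y(k+1)) (y k) \<le> gprod (y(k-1)) (y(k+1)) (y k) + \<delta>"
      using Suc by simp
    have Hk: "gprod (y(k-1)) (y(k+1)) (y k) + gprod (y k) (y(k+2)) (y(k+1)) + 2*\<delta> < dist (y k) (y(k+1))"
      using H[of k] False Suc.prems by simp
    have fp: "gprod (y k) (y(k+2)) (y(k+1)) \<ge> min (gprod (y k) (y 0) (y(k+1))) (gprod (y 0) (y(k+2)) (y(k+1))) - \<delta>"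
      using hyp unfolding hyperbolic_def by blast
    have pr: "gprod (y k) (y 0) (y(k+1)) + gprod (y(k+1)) (y 0) (y k) = dist (y k) (y (k+1))"
      by (rule gprod_pair)
    have cm: "gprod (y(k+1)) (y 0) (y k) = gprod (y 0) (y(k+1)) (y k)" by (rule gprod_comm)
    have "gprod (y 0) (y(k+2)) (y(k+1)) \<le> gprod (y k) (y(k+2)) (y(k+1)) + \<delta>"
      using fp pr cm IH Hk by (auto simp: min_def split: if_splits)
    thus ?thesis by (simp add: numeral_2_eq_2)
  qed
qed

lemma wprod_closed:
  assumes "group G" "set xs \<subseteq> carrier G"
  shows "wprod G xs \<in> carrier G"
  using assms(2) unfolding wprod_def
  by (induction xs) (auto simp: group.is_monoid[OF assms(1)] monoid.m_closed[OF group.is_monoid[OF assms(1)]])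

lemma wprod_append:
  assumes "group G" "set xs \<subseteq> carrier G" "set ys \<subseteq> carrier G"
  shows "wprod G (xs @ ys) = wprod G xs \<otimes>\<^bsub>G\<^esub> wprod G ys"
  using assms(2)
proof (induction xs)
  case Nil
  have "wprod G ys \<in> carrier G" using wprod_closed assms by blast
  then show ?case using assms(1) by (simp add: wprod_def group.is_monoid monoid.l_one)
next
  case (Cons a xs)
  have c: "wprod G xs \<in> carrier G" "wprod G ys \<in> carrier G" "a \<in> carrier G"
    using wprod_closed assms Cons.prems by auto
  have "wprod G (a # xs @ ys) = a \<otimes>\<^bsub>G\<^esub> wprod G (xs @ ys)" by (simp add: wprod_def)
  also have "\<dots> = a \<otimes>\<^bsub>G\<^esub> (wprod G xs \<otimes>\<^bsub>G\<^esub> wprod G ys)" using Cons by simp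
  also have "\<dots> = (a \<otimes>\<^bsub>G\<^esub> wprod G xs) \<otimes>\<^bsub>G\<^esub> wprod G ys"
    using c assms(1) by (simp add: group.is_monoid monoid.m_assoc)
  finally show ?case by (simp add: wprod_def)
qed

theorem mainTheorem9:
  fixes G :: "('g, 'b) monoid_scheme"
    and act :: "'g \<Rightarrow> 'x::metric_space \<Rightarrow> 'x"
    and \<delta> \<alpha> :: real and U :: "'g set" and p :: 'x and ws :: "'g list" and n :: nat
  assumes "group G"
    and "isometric_action G act"
    and "geodesic_space TYPE('x)"
    and "hyperbolic TYPE('x) \<delta>"
    and "\<alpha> \<ge> 3 * \<delta>"
    and "alpha_reduced G act \<delta> \<alpha> U p"
    and "n \<ge> 2" and "length ws = n"
    and "reduced_word G U ws"
  defines "x \<equiv> (\<lambda>i. act (wprod G (take i ws)) p)"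
  shows "(\<forall>i\<in>{1..n-2}.
            gprod (x (i - 1)) (x (i + 1)) (x i) + gprod (x i) (x (i + 2)) (x (i + 1))
              < dist (x i) (x (i + 1)) - 2 * (\<alpha> + 50 * \<delta>))
       \<and> dist (act (wprod G ws) p) p
           \<ge> dist (act (ws ! 0) p) p / 2 + dist (act (ws ! (n - 1)) p) p / 2
             + 2 * (real n - 1) * (\<alpha> + 40 * \<delta>) + 4 * (real n - 1) * \<delta>
       \<and> (\<forall>i\<in>{1..n-2}.
            gprod p (act (wprod G ws) p) (x i)
              \<le> gprod (act (inv\<^bsub>G\<^esub> (ws ! (i - 1))) p) (act (ws ! i) p) p + 2 * \<delta>)"
  proof -
  interpret G: group G by fact
  note dG = assms(2)[unfolded isometric_action_def]
  have act1: "\<And>y. act \<one>\<^bsub>G\<^esub> y = y" using dG by blast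
  have actm: "\<And>g h y. g \<in> carrier G \<Longrightarrow> h \<in> carrier G \<Longrightarrow> act (g \<otimes>\<^bsub>G\<^esub> h) y = act g (act h y)"
    using dG by blast
  have actd: "\<And>g y z. g \<in> carrier G \<Longrightarrow> dist (act g y) (act g z) = dist y z" using dG by blast
  have gp: "\<And>g a b c. g \<in> carrier G \<Longrightarrow> gprod (act g a) (act g b) (act g c) = gprod a b c"
    by (simp add: gprod_def actd)
  have d0: "\<delta> \<ge> 0" using hyp_delta_nonneg[OF assms(4)] .
  note AR = assms(6)[unfolded alpha_reduced_def]
  define V where "V = U \<union> (\<lambda>u. inv\<^bsub>G\<^esub> u) ` U"
  have Ucar: "U \<subseteq> carrier G" using AR by blast
  have Vcar: "V \<subseteq> carrier G" using Ucar unfolding V_def by auto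
  have Vinv: "\<And>u. u \<in> V \<Longrightarrow> inv\<^bsub>G\<^esub> u \<in> V"
  proof -
    fix u assume "u \<in> V"
    then consider "u \<in> U" | v where "v \<in> U" "u = inv\<^bsub>G\<^esub> v" unfolding V_def by blast
    then show "inv\<^bsub>G\<^esub> u \<in> V"
    proof cases
      case 1 then show ?thesis unfolding V_def by blast
    next
      case 2 then show ?thesis using Ucar unfolding V_def by auto
    qed
  qed
  have red: "\<And>u1 u2. u1 \<in> V \<Longrightarrow> u2 \<in> V \<Longrightarrow> u1 \<noteq> u2 \<Longrightarrow>
        gprod (act u1 p) (act u2 p) p < min (dist (act u1 p) p) (dist (act u2 p) p) / 2 - \<alpha> - 50 * \<delta>"
    using AR unfolding V_def by blast
  note RW = assms(9)[unfolded reduced_word_def, folded V_def]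
  have wsV: "\<And>i. i < n \<Longrightarrow> ws ! i \<in> V" using RW assms(8) nth_mem by blast
  have wscar: "\<And>i. i < n \<Longrightarrow> ws ! i \<in> carrier G" using wsV Vcar by blast
  have setws: "set ws \<subseteq> carrier G" using RW Vcar by blast
  define g where "g i = wprod G (take i ws)" for i
  have gcar: "\<And>i. g i \<in> carrier G" unfolding g_def
    by (rule wprod_closed[OF assms(1)]) (meson setws set_take_subset subset_trans)
  have gSuc: "\<And>i. i < n \<Longrightarrow> g (Suc i) = g i \<otimes>\<^bsub>G\<^esub> ws ! i"
  proof -
    fix i assume i: "i < n"
    have "take (Suc i) ws = take i ws @ [ws ! i]" using i assms(8) by (simp add: take_Suc_conv_app_nth)
    hence "g (Suc i) = g i \<otimes>\<^bsub>G\<^esub> wprod G [ws ! i]" unfolding g_def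
      using wprod_append[OF assms(1), of "take i ws" "[ws ! i]"] wscar[OF i] setws
      by (metis empty_set empty_subsetI insert_subset list.simps(15) set_take_subset subset_trans)
    thus "g (Suc i) = g i \<otimes>\<^bsub>G\<^esub> ws ! i" using wscar[OF i] by (simp add: wprod_def)
  qed
  have xg: "\<And>i. x i = act (g i) p" unfolding x_def g_def by simp
  have x0: "x 0 = p" using act1 by (simp add: xg g_def wprod_def)
  have xn: "x n = act (wprod G ws) p" using assms(8) by (simp add: xg g_def)
  define a where "a i = dist (act (ws!(i-1)) p) p" for i
  define c where "c i = gprod (act (inv\<^bsub>G\<^esub> (ws!(i-1))) p) (act (ws!i) p) p" for i
  have ainv: "\<And>u. u \<in> carrier G \<Longrightarrow> dist (act (inv\<^bsub>G\<^esub> u) p) p = dist (act u p) p"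
  proof -
    fix u assume u: "u \<in> carrier G"
    have "dist (act (inv\<^bsub>G\<^esub> u) p) p = dist (act u (act (inv\<^bsub>G\<^esub> u) p)) (act u p)"
      using actd u by simp
    also have "act u (act (inv\<^bsub>G\<^esub> u) p) = p" using actm[of u "inv\<^bsub>G\<^esub> u" p] u act1 by simp
    finally show "dist (act (inv\<^bsub>G\<^esub> u) p) p = dist (act u p) p" by (simp add: dist_commute)
  qed
  have da: "\<And>i. i < n \<Longrightarrow> dist (x i) (x (i+1)) = a (i+1)"
  proof -
    fix i assume i: "i < n"
    have "dist (x i) (x (i+1)) = dist (act (g i) p) (act (g i) (act (ws!i) p))"
      using xg gSuc[OF i] actm gcar wscar[OF i] by simp
    also have "\<dots> = a (i+1)" using actd gcar by (simp add: a_def dist_commute)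
    finally show "dist (x i) (x (i+1)) = a (i+1)" .
  qed
  have gc: "\<And>i. 1 \<le> i \<Longrightarrow> i < n \<Longrightarrow> gprod (x (i-1)) (x (i+1)) (x i) = c i"
  proof -
    fix i assume i: "1 \<le> i" "i < n"
    obtain j where j: "i = Suc j" using i by (cases i) auto
    have uj: "ws ! j \<in> carrier G" using wscar i j by simp
    have "g i \<otimes>\<^bsub>G\<^esub> inv\<^bsub>G\<^esub> (ws!j) = g j"
      using gSuc[of j] i j gcar uj by (simp add: G.m_assoc)
    hence "x (i-1) = act (g i) (act (inv\<^bsub>G\<^esub> (ws!j)) p)"
      using xg j actm gcar uj by (metis G.inv_closed diff_Suc_1)
    moreover have "x (i+1) = act (g i) (act (ws!i) p)"
      using xg gSuc[of i] i actm gcar wscar by simp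
    ultimately show "gprod (x (i-1)) (x (i+1)) (x i) = c i"
      using gp gcar xg j by (simp add: c_def)
  qed
  have cb: "\<And>i. 1 \<le> i \<Longrightarrow> i < n \<Longrightarrow> c i < min (a i) (a (i+1)) / 2 - \<alpha> - 50 * \<delta>"
  proof -
    fix i assume i: "1 \<le> i" "i < n"
    obtain j where j: "i = Suc j" using i by (cases i) auto
    have "ws ! Suc j \<noteq> inv\<^bsub>G\<^esub> (ws ! j)" using RW i j assms(8) by auto
    hence "gprod (act (inv\<^bsub>G\<^esub> (ws!j)) p) (act (ws!i) p) p
       < min (dist (act (inv\<^bsub>G\<^esub> (ws!j)) p) p) (dist (act (ws!i) p) p) / 2 - \<alpha> - 50 * \<delta>"
      using red[of "inv\<^bsub>G\<^esub> (ws!j)" "ws!i"] Vinv wsV i j by auto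
    thus "c i < min (a i) (a (i+1)) / 2 - \<alpha> - 50 * \<delta>"
      using ainv wscar i j by (simp add: c_def a_def)
  qed
  have cc: "\<And>i. 1 \<le> i \<Longrightarrow> i + 1 < n \<Longrightarrow> c i + c (i+1) < a (i+1) - 2 * (\<alpha> + 50 * \<delta>)"
  proof -
    fix i assume i: "1 \<le> i" "i + 1 < n"
    have "c i < min (a i) (a (i+1)) / 2 - \<alpha> - 50 * \<delta>" using cb i by simp
    moreover have "c (i+1) < min (a (i+1)) (a (i+1+1)) / 2 - \<alpha> - 50 * \<delta>" using cb[of "i+1"] i by simp
    ultimately show "c i + c (i+1) < a (i+1) - 2 * (\<alpha> + 50 * \<delta>)" by (simp add: min_def split: if_splits)
  qed
  have P1: "\<forall>i\<in>{1..n-2}.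
            gprod (x (i - 1)) (x (i + 1)) (x i) + gprod (x i) (x (i + 2)) (x (i + 1))
              < dist (x i) (x (i + 1)) - 2 * (\<alpha> + 50 * \<delta>)"
  proof
    fix i assume i: "i \<in> {1..n-2}"
    have "gprod (x i) (x (i + 2)) (x (i + 1)) = c (i+1)" using gc[of "i+1"] i assms(7) by (auto simp: numeral_2_eq_2)
    thus "gprod (x (i - 1)) (x (i + 1)) (x i) + gprod (x i) (x (i + 2)) (x (i + 1))
              < dist (x i) (x (i + 1)) - 2 * (\<alpha> + 50 * \<delta>)"
      using gc[of i] da[of i] cc[of i] i by auto
  qed
  have fwd: "\<And>k. 1 \<le> k \<Longrightarrow> k < n \<Longrightarrow> gprod (x 0) (x (k+1)) (x k) \<le> c k + \<delta>"
  proof -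
    fix k assume k: "1 \<le> k" "k < n"
    have "gprod (x 0) (x (k+1)) (x k) \<le> gprod (x (k-1)) (x (k+1)) (x k) + \<delta>"
    proof (rule chain[OF assms(4), where m = n])
      fix j assume j: "1 \<le> j" "j + 1 < n"
      have "gprod (x j) (x (j + 2)) (x (j + 1)) = c (j+1)" using gc[of "j+1"] j by (simp add: numeral_2_eq_2)
      thus "gprod (x (j - 1)) (x (j + 1)) (x j) + gprod (x j) (x (j + 2)) (x (j + 1)) + 2 * \<delta> < dist (x j) (x (j + 1))"
        using gc[of j] da[of j] cc[of j] j d0 assms(5) by auto
    qed (use k in auto)
    thus "gprod (x 0) (x (k+1)) (x k) \<le> c k + \<delta>" using gc k by simp
  qed
  have bwd: "\<And>i. 1 \<le> i \<Longrightarrow> i + 1 < n \<Longrightarrow> gprod (x n) (x i) (x (i+1)) \<le> c (i+1) + \<delta>"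
  proof -
    fix i assume i: "1 \<le> i" "i + 1 < n"
    define y where "y k = x (n - k)" for k
    have "gprod (y 0) (y ((n-i-1)+1)) (y (n-i-1)) \<le> gprod (y ((n-i-1)-1)) (y ((n-i-1)+1)) (y (n-i-1)) + \<delta>"
    proof (rule chain[OF assms(4), where m = n])
      fix j assume j: "1 \<le> j" "j + 1 < n"
      define l where "l = n - j - 1"
      have l: "1 \<le> l" "l + 1 < n" "n - (j - 1) = l + 2" "n - (j+1) = l" "n - j = l + 1" "n - (j+2) = l - 1"
        using j unfolding l_def by auto
      have e1: "gprod (y (j - 1)) (y (j + 1)) (y j) = c (l+1)"
        using gc[of "l+1"] l unfolding y_def by (simp add: numeral_2_eq_2 gprod_comm)
      have e2: "gprod (y j) (y (j + 2)) (y (j + 1)) = c l"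
        using gc[of "l"] l unfolding y_def by (simp add: gprod_comm)
      have e3: "dist (y j) (y (j + 1)) = a (l+1)" using da[of l] l unfolding y_def by (simp add: dist_commute)
      show "gprod (y (j - 1)) (y (j + 1)) (y j) + gprod (y j) (y (j + 2)) (y (j + 1)) + 2 * \<delta> < dist (y j) (y (j + 1))"
        using e1 e2 e3 cc[of l] l d0 assms(5) by auto
    qed (use i in auto)
    moreover have "n - (n-i-1) = i+1" "n - (n-i-1+1) = i" "n - (n-i-1-1) = i + 2" using i by auto
    ultimately have "gprod (x n) (x i) (x (i+1)) \<le> gprod (x (i+2)) (x i) (x (i+1)) + \<delta>"
      unfolding y_def by simp
    thus "gprod (x n) (x i) (x (i+1)) \<le> c (i+1) + \<delta>"
      using gc[of "i+1"] i by (simp add: gprod_comm numeral_2_eq_2)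
  qed
  have D: "\<And>k. 1 \<le> k \<Longrightarrow> k \<le> n \<Longrightarrow> dist (x 0) (x k) \<ge> a 1 / 2 + a k / 2 + 2 * (real k - 1) * (\<alpha> + 42 * \<delta>)"
  proof -
    fix k assume "1 \<le> k" "k \<le> n"
    then show "dist (x 0) (x k) \<ge> a 1 / 2 + a k / 2 + 2 * (real k - 1) * (\<alpha> + 42 * \<delta>)"
    proof (induction k rule: dec_induct)
      case base
      then show ?case using da[of 0] assms(7) by simp
    next
      case (step k)
      have pr: "gprod (x 0) (x (k+1)) (x k) + gprod (x k) (x (k+1)) (x 0) = dist (x 0) (x k)"
        using gprod_pair[of "x k" "x (k+1)" "x 0"] by (simp add: dist_commute)
      have g1: "gprod (x 0) (x (k+1)) (x k) \<le> c k + \<delta>" using fwd step by simp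
      have dk: "dist (x k) (x (k+1)) = a (k+1)" using da step by simp
      have "gprod (x k) (x (k+1)) (x 0) = (dist (x 0) (x k) + dist (x 0) (x (k+1)) - dist (x k) (x (k+1)))/2"
        by (simp add: gprod_def dist_commute)
      have ck: "c k < min (a k) (a (k+1)) / 2 - \<alpha> - 50 * \<delta>" using cb step by simp
      hence "2 * c k \<le> a k / 2 + a (k+1) / 2 - 2 * \<alpha> - 100 * \<delta>" by (simp add: min_def split: if_splits)
      moreover have IH: "dist (x 0) (x k) \<ge> a 1 / 2 + a k / 2 + 2 * (real k - 1) * (\<alpha> + 42 * \<delta>)"
        using step by simp
      moreover have "dist (x 0) (x (Suc k)) = dist (x 0) (x k) + a (Suc k) - 2 * gprod (x 0) (x (k+1)) (x k)"
        using dk unfolding gprod_def by (simp add: dist_commute field_simps)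
      moreover have "2 * (real (Suc k) - 1) * (\<alpha> + 42 * \<delta>) = 2 * (real k - 1) * (\<alpha> + 42 * \<delta>) + 2 * \<alpha> + 84 * \<delta>"
        by (simp add: algebra_simps)
      moreover have "2 * c k \<le> a k / 2 + a (Suc k) / 2 - 2 * \<alpha> - 100 * \<delta>" using \<open>2 * c k \<le> a k / 2 + a (k+1) / 2 - 2 * \<alpha> - 100 * \<delta>\<close> by simp
      ultimately show ?case using g1 d0 by linarith
    qed
  qed
  have P2: "dist (act (wprod G ws) p) p
           \<ge> dist (act (ws ! 0) p) p / 2 + dist (act (ws ! (n - 1)) p) p / 2
             + 2 * (real n - 1) * (\<alpha> + 40 * \<delta>) + 4 * (real n - 1) * \<delta>"
    using D[of n] assms(7) xn x0 by (simp add: a_def dist_commute algebra_simps)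
  have P3: "\<forall>i\<in>{1..n-2}.
            gprod p (act (wprod G ws) p) (x i)
              \<le> gprod (act (inv\<^bsub>G\<^esub> (ws ! (i - 1))) p) (act (ws ! i) p) p + 2 * \<delta>"
  proof
    fix i assume i: "i \<in> {1..n-2}"
    hence i1: "1 \<le> i" "i + 1 < n" by auto
    have f: "gprod (x 0) (x (i+1)) (x i) \<le> c i + \<delta>" using fwd i1 by simp
    have b: "gprod (x n) (x i) (x (i+1)) \<le> c (i+1) + \<delta>" using bwd i1 by simp
    have fp: "gprod (x 0) (x (i+1)) (x i) \<ge> min (gprod (x 0) (x n) (x i)) (gprod (x n) (x (i+1)) (x i)) - \<delta>"
      using assms(4) unfolding hyperbolic_def by blast
    have pr: "gprod (x i) (x n) (x (i+1)) + gprod (x (i+1)) (x n) (x i) = dist (x i) (x (i+1))"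
      by (rule gprod_pair)
    have cm: "gprod (x i) (x n) (x (i+1)) = gprod (x n) (x i) (x (i+1))"
      "gprod (x (i+1)) (x n) (x i) = gprod (x n) (x (i+1)) (x i)" by (rule gprod_comm)+
    have "gprod (x 0) (x n) (x i) \<le> c i + 2 * \<delta>"
      using f b fp pr cm da[of i] cc[of i] i1 d0 assms(5) by (auto simp: min_def split: if_splits)
    thus "gprod p (act (wprod G ws) p) (x i)
              \<le> gprod (act (inv\<^bsub>G\<^esub> (ws ! (i - 1))) p) (act (ws ! i) p) p + 2 * \<delta>"
      using x0 xn by (simp add: c_def)
  qed
  show ?thesis using P1 P2 P3 by blast
qed

end
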